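(* Suppose $w=w_1w_2\cdots w_n$ and $\tilde w=\tilde w_1\tilde w_2\cdots\tilde w_n$ are reduced words with $\tilde w_i-w_i\in\{0,1\}$ for all $i\in[n]$. Then $Q_{\mathsf{EG}}(w)=Q_{\mathsf{EG}}(\tilde w)$.
   Context: $S_\mathbb{Z}$ is the group of finitely supported permutations of $\mathbb{Z}$ with generators $s_i=(i,i+1)$; a reduced word (for some $\sigma\in S_\mathbb{Z}$) is a minimal-length word $i_1\cdots i_l$ with $\sigma=s_{i_1}\cdots s_{i_l}$. Tableaux are fillings of Young diagrams of partitions (French notation, rows numbered bottom to top). Edelman–Greene insertion of a reduced word $w=w_1\cdots w_n$: starting from the empty tableau, insert $w_1,\dots,w_n$ in turn, each starting in the first row; when $x$ is inserted into a row, let $y$ be the smallest entry in the row with $x\le y$; if none exists, $x$ is added to the end of the row; if $x=y$ the row is unchanged and $y+1$ is inserted into the next row; if $x<y$, $y$ is replaced by $x$ and $y$ is inserted into the next row. $Q_{\mathsf{EG}}(w)$ is the tableau of the resulting shape with entry $i$ in the box added when inserting $w_i$. *)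

theory Defs
  imports Main
begin

definition s_gen :: "int \<Rightarrow> int \<Rightarrow> int" where
  "s_gen i x = (if x = i then i + 1 else if x = i + 1 then i else x)"

definition perm_of_word :: "int list \<Rightarrow> int \<Rightarrow> int" where
  "perm_of_word w = foldr (\<lambda>i f. s_gen i \<circ> f) w id"

definition reduced_word :: "int list \<Rightarrow> bool" where
  "reduced_word w \<longleftrightarrow> (\<forall>v. perm_of_word v = perm_of_word w \<longrightarrow> length w \<le> length v)"

fun replace_first :: "int \<Rightarrow> int \<Rightarrow> int list \<Rightarrow> int list" where
  "replace_first y x [] = []"
| "replace_first y x (z # zs) = (if z = y then x # zs else z # replace_first y x zs)"

(* Edelman-Greene insertion of x into a tableau, given as the list of its rows
   (row 1 first, i.e. bottom row in French notation).  Returns the new tableau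
   and the (0-based) index of the row in which a box was added. *)
primrec eg_insert :: "int \<Rightarrow> int list list \<Rightarrow> int list list \<times> nat" where
  "eg_insert x [] = ([[x]], 0)"
| "eg_insert x (r # rs) =
     (if \<not> (\<exists>y\<in>set r. x \<le> y) then ((r @ [x]) # rs, 0)
      else (let y = Min {y \<in> set r. x \<le> y} in
            if x = y then (r # fst (eg_insert (y + 1) rs), Suc (snd (eg_insert (y + 1) rs)))
            else (replace_first y x r # fst (eg_insert y rs), Suc (snd (eg_insert y rs)))))"

definition add_box :: "nat \<Rightarrow> nat \<Rightarrow> nat list list \<Rightarrow> nat list list" where
  "add_box k i Q = (if k < length Q then Q[k := Q ! k @ [i]] else Q @ [[i]])"

definition eg_step :: "int list list \<times> nat list list \<Rightarrow> nat \<times> int \<Rightarrow> int list list \<times> nat list list" where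
  "eg_step PQ iw = (let (P, Q) = PQ; (i, x) = iw; (P', k) = eg_insert x P in (P', add_box k i Q))"

definition EG :: "int list \<Rightarrow> int list list \<times> nat list list" where
  "EG w = foldl eg_step ([], []) (zip [1..<length w + 1] w)"

definition Q_EG :: "int list \<Rightarrow> nat list list" where
  "Q_EG w = snd (EG w)"

end

theory Submission
  imports Defs
begin


lemma foldr_perm: "foldr (\<lambda>i f. s_gen i \<circ> f) u g = perm_of_word u \<circ> g"
  by (induction u arbitrary: g) (auto simp: perm_of_word_def)

lemma perm_append: "perm_of_word (u @ v) = perm_of_word u \<circ> perm_of_word v"
  by (induction u) (auto simp: perm_of_word_def)

lemma perm_Cons: "perm_of_word (i # u) = s_gen i \<circ> perm_of_word u"
  by (simp add: perm_of_word_def)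

lemma perm_Nil: "perm_of_word [] = id"
  by (simp add: perm_of_word_def)

lemma s_comm: "\<bar>i - j\<bar> \<ge> 2 \<Longrightarrow> s_gen i \<circ> s_gen j = s_gen j \<circ> s_gen i"
  by (rule ext) (simp add: s_gen_def, arith)

lemma s_invol: "s_gen i \<circ> s_gen i = id"
  by (rule ext) (simp add: s_gen_def)

lemma s_braid: "s_gen i \<circ> (s_gen (i+1) \<circ> s_gen i) = s_gen (i+1) \<circ> (s_gen i \<circ> s_gen (i+1))"
  by (rule ext) (simp add: s_gen_def)

lemma perm_comm_across:
  assumes "\<forall>j\<in>set a. \<bar>j - y\<bar> \<ge> 2"
  shows "perm_of_word (a @ [y]) = perm_of_word (y # a)"
  using assms
proof (induction a)
  case Nil then show ?case by simp
next
  case (Cons j a)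
  have "perm_of_word ((j # a) @ [y]) = s_gen j \<circ> perm_of_word (a @ [y])"
    by (simp only: append_Cons perm_Cons)
  also have "\<dots> = s_gen j \<circ> perm_of_word (y # a)" using Cons by simp
  also have "\<dots> = (s_gen j \<circ> s_gen y) \<circ> perm_of_word a" by (simp add: perm_Cons comp_assoc)
  also have "\<dots> = (s_gen y \<circ> s_gen j) \<circ> perm_of_word a" using Cons.prems s_comm[of j y] by simp
  finally show ?case by (simp add: perm_Cons comp_assoc)
qed

lemma reduced_same: "reduced_word w \<Longrightarrow> perm_of_word v = perm_of_word w \<Longrightarrow> length v = length w \<Longrightarrow> reduced_word v"
  unfolding reduced_word_def by auto

lemma reduced_prefix: "reduced_word (u @ v) \<Longrightarrow> reduced_word u"
  unfolding reduced_word_def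
proof (intro allI impI, rule ccontr)
  fix u'
  assume H: "\<forall>v'. perm_of_word v' = perm_of_word (u @ v) \<longrightarrow> length (u @ v) \<le> length v'"
    and p: "perm_of_word u' = perm_of_word u" and l: "\<not> length u \<le> length u'"
  have "perm_of_word (u' @ v) = perm_of_word (u @ v)" using p by (simp add: perm_append)
  with H have "length (u @ v) \<le> length (u' @ v)" by blast
  with l show False by simp
qed

lemma reduced_suffix: "reduced_word (u @ v) \<Longrightarrow> reduced_word v"
  unfolding reduced_word_def
proof (intro allI impI, rule ccontr)
  fix v'
  assume H: "\<forall>v''. perm_of_word v'' = perm_of_word (u @ v) \<longrightarrow> length (u @ v) \<le> length v''"
    and p: "perm_of_word v' = perm_of_word v" and l: "\<not> length v \<le> length v'"
  have "perm_of_word (u @ v') = perm_of_word (u @ v)" using p by (simp add: perm_append)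
  with H have "length (u @ v) \<le> length (u @ v')" by blast
  with l show False by simp
qed

lemma not_reduced_double: "\<not> reduced_word (a # a # u)"
proof
  assume "reduced_word (a # a # u)"
  moreover have "perm_of_word u = perm_of_word (a # a # u)"
    by (simp add: perm_Cons comp_assoc[symmetric] s_invol)
  ultimately show False unfolding reduced_word_def by fastforce
qed



fun rins :: "int \<Rightarrow> int list \<Rightarrow> int list \<times> int option" where
  "rins x [] = ([x], None)"
| "rins x (y # ys) = (if x \<le> y then (if x = y then (y # ys, Some (y + 1)) else (x # ys, Some y))
     else (y # fst (rins x ys), snd (rins x ys)))"

lemma rins_eq:
  assumes "sorted_wrt (<) r"
  shows "rins x r = (if \<not> (\<exists>y\<in>set r. x \<le> y) then (r @ [x], None)
      else (let y = Min {y \<in> set r. x \<le> y} in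
            if x = y then (r, Some (y + 1)) else (replace_first y x r, Some y)))"
  using assms
proof (induction r)
  case Nil then show ?case by simp
next
  case (Cons y ys)
  show ?case
  proof (cases "x \<le> y")
    case True
    have "Min {v \<in> set (y # ys). x \<le> v} = y"
      using Cons.prems True by (intro Min_eqI) auto
    with True show ?thesis by (auto simp: Let_def)
  next
    case False
    have eq: "{v \<in> set (y # ys). x \<le> v} = {v \<in> set ys. x \<le> v}" using False by auto
    have m: "\<exists>v\<in>set ys. x \<le> v \<Longrightarrow> Min {v \<in> set ys. x \<le> v} \<ge> x"
      by (subst Min_ge_iff) auto
    show ?thesis using False Cons m unfolding eq by (auto simp: Let_def)
  qed
qed

lemma eg_insert_rins:
  assumes "sorted_wrt (<) r"
  shows "eg_insert x (r # rs) = (case rins x r of (r', None) \<Rightarrow> (r' # rs, 0)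
     | (r', Some z) \<Rightarrow> (r' # fst (eg_insert z rs), Suc (snd (eg_insert z rs))))"
  using rins_eq[OF assms, of x] by (simp add: Let_def)

lemma rins_props:
  assumes "sorted_wrt (<) r"
  shows "sorted_wrt (<) (fst (rins x r)) \<and> set (fst (rins x r)) \<subseteq> insert x (set r)
    \<and> (\<forall>z. snd (rins x r) = Some z \<longrightarrow> x < z \<and> length (fst (rins x r)) = length r)
    \<and> (snd (rins x r) = None \<longrightarrow> fst (rins x r) = r @ [x])"
  using assms
proof (induction r)
  case Nil then show ?case by simp
next
  case (Cons y ys)
  then show ?case by (auto simp: less_le_trans)
qed

lemma row_key:
  assumes "sorted_wrt (<) r" "reduced_word (r @ [x])" "x \<in> set r"
  shows "x + 1 \<in> set r"
  using assms
proof (induction r)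
  case Nil then show ?case by simp
next
  case (Cons y ys)
  show ?case
  proof (cases "x = y")
    case False
    then have "x \<in> set ys" using Cons.prems by simp
    moreover have "reduced_word (ys @ [x])" using Cons.prems(2) reduced_suffix[of "[y]"] by simp
    ultimately show ?thesis using Cons by simp
  next
    case True
    show ?thesis
    proof (rule ccontr)
      assume "x + 1 \<notin> set (y # ys)"
      then have "\<forall>j\<in>set ys. \<bar>j - x\<bar> \<ge> 2"
      proof (intro ballI)
        fix j assume "j \<in> set ys" "x + 1 \<notin> set (y # ys)"
        then have "j > x" "j \<noteq> x + 1" using Cons.prems(1) True by auto
        then show "\<bar>j - x\<bar> \<ge> 2" by simp
      qed
      then have "perm_of_word (ys @ [x]) = perm_of_word (x # ys)" by (rule perm_comm_across)
      then have "perm_of_word (y # ys @ [x]) = perm_of_word (y # x # ys)" by (simp add: perm_Cons)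
      moreover have "length (y # x # ys) = length (y # ys @ [x])" by simp
      ultimately have "reduced_word (y # x # ys)" using Cons.prems(2) reduced_same by fastforce
      then show False using True not_reduced_double by simp
    qed
  qed
qed

lemma row_perm:
  assumes "sorted_wrt (<) r" "reduced_word (r @ [x])" "snd (rins x r) = Some z"
  shows "perm_of_word (r @ [x]) = perm_of_word (z # fst (rins x r))"
  using assms
proof (induction r arbitrary: z)
  case Nil then show ?case by simp
next
  case (Cons y ys)
  show ?case
  proof (cases "x \<le> y")
    case True
    show ?thesis
    proof (cases "x = y")
      case False
      then have z: "z = y" "fst (rins x (y # ys)) = x # ys" using True Cons.prems by auto
      have "\<forall>j\<in>set ys. \<bar>j - x\<bar> \<ge> 2" using Cons.prems(1) True False by force
      then have "perm_of_word (ys @ [x]) = perm_of_word (x # ys)" by (rule perm_comm_across)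
      then show ?thesis using z by (simp add: perm_Cons)
    next
      case xy: True
      then have z: "z = y + 1" "fst (rins x (y # ys)) = y # ys" using True Cons.prems by auto
      have "y + 1 \<in> set ys" using row_key[OF Cons.prems(1,2)] xy by simp
      then obtain a b where ys: "ys = a @ (y+1) # b" by (meson split_list)
      have "a = []"
      proof (rule ccontr)
        assume "a \<noteq> []"
        then obtain c a' where "a = c # a'" by (cases a) auto
        then show False using Cons.prems(1) ys by auto
      qed
      then have ys2: "ys = (y + 1) # b" using ys by simp
      have "\<forall>j\<in>set b. \<bar>j - y\<bar> \<ge> 2" using Cons.prems(1) ys2 by force
      then have pb: "perm_of_word (b @ [y]) = perm_of_word (y # b)" by (rule perm_comm_across)
      have "perm_of_word ((y # ys) @ [x]) = s_gen y \<circ> (s_gen (y+1) \<circ> s_gen y) \<circ> perm_of_word b"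
        using pb xy ys2 by (simp add: perm_Cons comp_assoc)
      also have "\<dots> = s_gen (y+1) \<circ> (s_gen y \<circ> s_gen (y+1)) \<circ> perm_of_word b"
        by (simp only: s_braid)
      finally show ?thesis using z ys2 by (simp add: perm_Cons comp_assoc)
    qed
  next
    case False
    then have sz: "snd (rins x ys) = Some z" and f: "fst (rins x (y # ys)) = y # fst (rins x ys)"
      using Cons.prems by auto
    have red: "reduced_word (ys @ [x])" using Cons.prems(2) reduced_suffix[of "[y]"] by simp
    have sy: "sorted_wrt (<) ys" using Cons.prems(1) by simp
    have IH: "perm_of_word (ys @ [x]) = perm_of_word (z # fst (rins x ys))"
      using Cons.IH[OF sy red sz] .
    have "x < z" using rins_props[OF sy, of x] sz by auto
    then have "\<bar>y - z\<bar> \<ge> 2" using False by simp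
    then have c: "s_gen y \<circ> s_gen z = s_gen z \<circ> s_gen y" by (rule s_comm)
    have "perm_of_word ((y # ys) @ [x]) = (s_gen y \<circ> s_gen z) \<circ> perm_of_word (fst (rins x ys))"
      using IH by (simp add: perm_Cons comp_assoc)
    also have "\<dots> = (s_gen z \<circ> s_gen y) \<circ> perm_of_word (fst (rins x ys))" using c by simp
    finally show ?thesis using f by (simp add: perm_Cons comp_assoc)
  qed
qed



definition R :: "int \<Rightarrow> int \<Rightarrow> bool" where "R a b \<longleftrightarrow> a \<le> b \<and> b \<le> a + 1"

lemma R_fun: "R = (\<lambda>a b. a \<le> b \<and> b \<le> a + 1)"
  by (intro ext) (simp add: R_def)

lemma next_elem:
  fixes y :: int
  assumes "sorted_wrt (<) (y # ys)" "y + 1 \<in> set ys"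
  shows "\<exists>ys'. ys = (y + 1) # ys'"
proof (cases ys)
  case Nil then show ?thesis using assms by simp
next
  case (Cons a t)
  have "a > y" using assms Cons by simp
  moreover have "a = y + 1"
  proof (rule ccontr)
    assume "a \<noteq> y + 1"
    then have "y + 1 \<in> set t" using assms Cons by simp
    then have "a < y + 1" using assms Cons by fastforce
    with \<open>a > y\<close> show False by linarith
  qed
  ultimately show ?thesis using Cons by simp
qed

lemma row_pair:
  assumes "sorted_wrt (<) r" "sorted_wrt (<) rt" "list_all2 R r rt" "R x xt"
    "x \<in> set r \<longrightarrow> x + 1 \<in> set r" "xt \<in> set rt \<longrightarrow> xt + 1 \<in> set rt"
  shows "list_all2 R (fst (rins x r)) (fst (rins xt rt)) \<and>
    ((snd (rins x r) = None \<and> snd (rins xt rt) = None) \<or>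
     (\<exists>z zt. snd (rins x r) = Some z \<and> snd (rins xt rt) = Some zt \<and> R z zt))"
  using assms
proof (induction r arbitrary: rt)
  case Nil
  then show ?case by simp
next
  case (Cons y ys)
  from Cons.prems(3) obtain yt yts where rt: "rt = yt # yts" and Ry: "R y yt" and Rys: "list_all2 R ys yts"
    by (cases rt) auto
  have sy: "sorted_wrt (<) ys" and syt: "sorted_wrt (<) yts" using Cons.prems(1,2) rt by auto
  show ?case
  proof (cases "x \<le> y")
    case xle: True
    show ?thesis
    proof (cases "xt \<le> yt")
      case True
      then show ?thesis using xle Ry Rys Cons.prems(4) rt by (auto simp: R_fun)
    next
      case False
      then have e: "x = y" "yt = y" "xt = y + 1" using xle Ry Cons.prems(4) by (auto simp: R_fun)
      then have "y + 1 \<in> set ys" using Cons.prems(5) by simp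
      then obtain ys' where ys: "ys = (y + 1) # ys'" using next_elem Cons.prems(1) by blast
      then obtain yt1 yts' where yts: "yts = yt1 # yts'" and R1: "R (y+1) yt1" and R2: "list_all2 R ys' yts'"
        using Rys by (cases yts) auto
      show ?thesis
        using e ys yts R1 R2 rt by (auto simp: R_fun)
    qed
  next
    case xgt: False
    show ?thesis
    proof (cases "xt \<le> yt")
      case True
      then have e: "x = y + 1" "yt = y + 1" "xt = y + 1" using xgt Ry Cons.prems(4) by (auto simp: R_fun)
      then have "yt + 1 \<in> set yts" using Cons.prems(6) rt by simp
      then obtain yts' where yts: "yts = (yt + 1) # yts'" using next_elem Cons.prems(2) rt by blast
      then obtain y1 ys' where ys: "ys = y1 # ys'" and R1: "R y1 (yt+1)" and R2: "list_all2 R ys' yts'"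
        using Rys by (cases ys) auto
      have "y1 > y" using Cons.prems(1) ys by simp
      then have "y1 = x \<or> y1 = x + 1" using R1 e by (auto simp: R_fun)
      then show ?thesis
        using e ys yts R1 R2 rt by (auto simp: R_fun)
    next
      case False
      have k1: "x \<in> set ys \<longrightarrow> x + 1 \<in> set ys" using Cons.prems(5) xgt by auto
      have k2: "xt \<in> set yts \<longrightarrow> xt + 1 \<in> set yts" using Cons.prems(6) False rt by auto
      have IH: "list_all2 R (fst (rins x ys)) (fst (rins xt yts)) \<and>
        ((snd (rins x ys) = None \<and> snd (rins xt yts) = None) \<or>
        (\<exists>z zt. snd (rins x ys) = Some z \<and> snd (rins xt yts) = Some zt \<and> R z zt))"
        using Cons.IH[OF sy syt Rys Cons.prems(4) k1 k2] .
      then show ?thesis using xgt False rt Ry by simp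
    qed
  qed
qed



declare eg_insert.simps(2)[simp del]

lemma reduced_step:
  assumes "reduced_word (concat (rev rs) @ r @ [x])" "sorted_wrt (<) r" "snd (rins x r) = Some z"
  shows "reduced_word (concat (rev rs) @ [z])"
    and "perm_of_word (concat (rev rs) @ [z] @ fst (rins x r)) = perm_of_word (concat (rev rs) @ r @ [x])"
proof -
  have red: "reduced_word (r @ [x])" using assms(1) reduced_suffix by blast
  have p: "perm_of_word (r @ [x]) = perm_of_word (z # fst (rins x r))"
    using row_perm[OF assms(2) red assms(3)] .
  show pe: "perm_of_word (concat (rev rs) @ [z] @ fst (rins x r)) = perm_of_word (concat (rev rs) @ r @ [x])"
    using p by (simp add: perm_append)
  have l: "length (fst (rins x r)) = length r" using rins_props[OF assms(2), of x] assms(3) by auto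
  have "reduced_word (concat (rev rs) @ [z] @ fst (rins x r))"
    using reduced_same[OF assms(1) pe] l by simp
  then show "reduced_word (concat (rev rs) @ [z])"
    using reduced_prefix[of "concat (rev rs) @ [z]"] by simp
qed

lemma single:
  assumes "\<forall>r\<in>set P. sorted_wrt (<) r" "reduced_word (concat (rev P) @ [x])"
  shows "(\<forall>r\<in>set (fst (eg_insert x P)). sorted_wrt (<) r) \<and>
    perm_of_word (concat (rev (fst (eg_insert x P)))) = perm_of_word (concat (rev P) @ [x]) \<and>
    length (concat (rev (fst (eg_insert x P)))) = length (concat (rev P)) + 1"
  using assms
proof (induction P arbitrary: x)
  case Nil then show ?case by simp
next
  case (Cons r rs)
  have sr: "sorted_wrt (<) r" using Cons.prems by simp
  have srs: "\<forall>r\<in>set rs. sorted_wrt (<) r" using Cons.prems by simp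
  have red: "reduced_word (concat (rev rs) @ r @ [x])" using Cons.prems(2) by simp
  note props = rins_props[OF sr, of x]
  show ?case
  proof (cases "snd (rins x r)")
    case None
    then have e: "eg_insert x (r # rs) = (fst (rins x r) # rs, 0)"
      using eg_insert_rins[OF sr, of x rs] by (cases "rins x r") auto
    have f: "fst (rins x r) = r @ [x]" using props None by simp
    show ?thesis using Cons.prems props unfolding e f by simp
  next
    case (Some z)
    then have e: "eg_insert x (r # rs) = (fst (rins x r) # fst (eg_insert z rs), Suc (snd (eg_insert z rs)))"
      using eg_insert_rins[OF sr, of x rs] by (cases "rins x r") auto
    have rz: "reduced_word (concat (rev rs) @ [z])" and pe: "perm_of_word (concat (rev rs) @ [z] @ fst (rins x r)) = perm_of_word (concat (rev rs) @ r @ [x])"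
      using reduced_step[OF red sr Some] by auto
    note IH = Cons.IH[OF srs rz]
    have l: "length (fst (rins x r)) = length r" using props Some by auto
    have "perm_of_word (concat (rev (fst (eg_insert x (r # rs))))) =
        perm_of_word (concat (rev (fst (eg_insert z rs)))) \<circ> perm_of_word (fst (rins x r))"
      unfolding e by (simp add: perm_append)
    also have "\<dots> = perm_of_word (concat (rev rs) @ [z]) \<circ> perm_of_word (fst (rins x r))"
      using IH by simp
    also have "\<dots> = perm_of_word (concat (rev rs) @ [z] @ fst (rins x r))"
      by (metis perm_append comp_assoc append_assoc)
    also have "\<dots> = perm_of_word (concat (rev (r # rs)) @ [x])" using pe by simp
    finally have P1: "perm_of_word (concat (rev (fst (eg_insert x (r # rs))))) = perm_of_word (concat (rev (r # rs)) @ [x])" .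
    have L1: "length (concat (rev (fst (eg_insert x (r # rs))))) = length (concat (rev (r # rs))) + 1"
      using IH l unfolding e by simp
    have S1: "\<forall>a\<in>set (fst (eg_insert x (r # rs))). sorted_wrt (<) a"
      using IH props unfolding e by simp
    show ?thesis using P1 L1 S1 by blast
  qed
qed

lemma pair:
  assumes "\<forall>r\<in>set P. sorted_wrt (<) r" "\<forall>r\<in>set Pt. sorted_wrt (<) r"
    "list_all2 (list_all2 R) P Pt" "R x xt"
    "reduced_word (concat (rev P) @ [x])" "reduced_word (concat (rev Pt) @ [xt])"
  shows "snd (eg_insert x P) = snd (eg_insert xt Pt) \<and>
    list_all2 (list_all2 R) (fst (eg_insert x P)) (fst (eg_insert xt Pt))"
  using assms
proof (induction P arbitrary: Pt x xt)
  case Nil then show ?case by (simp add: R_def)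
next
  case (Cons r rs)
  from Cons.prems(3) obtain rt rts where Pt: "Pt = rt # rts" and Rr: "list_all2 R r rt"
    and Rrs: "list_all2 (list_all2 R) rs rts" by (cases Pt) auto
  have sr: "sorted_wrt (<) r" and srt: "sorted_wrt (<) rt" using Cons.prems Pt by auto
  have srs: "\<forall>r\<in>set rs. sorted_wrt (<) r" and srts: "\<forall>r\<in>set rts. sorted_wrt (<) r"
    using Cons.prems Pt by auto
  have red: "reduced_word (concat (rev rs) @ r @ [x])" using Cons.prems(5) by simp
  have redt: "reduced_word (concat (rev rts) @ rt @ [xt])" using Cons.prems(6) Pt by simp
  have k1: "x \<in> set r \<longrightarrow> x + 1 \<in> set r"
    using row_key[OF sr] reduced_suffix[OF red] by blast
  have k2: "xt \<in> set rt \<longrightarrow> xt + 1 \<in> set rt"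
    using row_key[OF srt] reduced_suffix[OF redt] by blast
  note rp = row_pair[OF sr srt Rr Cons.prems(4) k1 k2]
  show ?case
  proof (cases "snd (rins x r)")
    case None
    then have N2: "snd (rins xt rt) = None" using rp by auto
    have "eg_insert x (r # rs) = (fst (rins x r) # rs, 0)"
      using eg_insert_rins[OF sr, of x rs] None by (cases "rins x r") auto
    moreover have "eg_insert xt (rt # rts) = (fst (rins xt rt) # rts, 0)"
      using eg_insert_rins[OF srt, of xt rts] N2 by (cases "rins xt rt") auto
    ultimately show ?thesis using rp Rrs Pt by simp
  next
    case (Some z)
    then obtain zt where S2: "snd (rins xt rt) = Some zt" and Rz: "R z zt" using rp by auto
    have e: "eg_insert x (r # rs) = (fst (rins x r) # fst (eg_insert z rs), Suc (snd (eg_insert z rs)))"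
      using eg_insert_rins[OF sr, of x rs] Some by (cases "rins x r") auto
    have et: "eg_insert xt (rt # rts) = (fst (rins xt rt) # fst (eg_insert zt rts), Suc (snd (eg_insert zt rts)))"
      using eg_insert_rins[OF srt, of xt rts] S2 by (cases "rins xt rt") auto
    have rz: "reduced_word (concat (rev rs) @ [z])" using reduced_step[OF red sr Some] by auto
    have rzt: "reduced_word (concat (rev rts) @ [zt])" using reduced_step[OF redt srt S2] by auto
    note IH = Cons.IH[OF srs srts Rrs Rz rz rzt]
    show ?thesis using IH rp unfolding Pt e et by simp
  qed
qed

lemma main:
  assumes "length js = length u" "list_all2 R u ut"
    "\<forall>r\<in>set P. sorted_wrt (<) r" "\<forall>r\<in>set Pt. sorted_wrt (<) r"
    "list_all2 (list_all2 R) P Pt"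
    "reduced_word (concat (rev P) @ u)" "reduced_word (concat (rev Pt) @ ut)"
  shows "snd (foldl eg_step (P, Q) (zip js u)) = snd (foldl eg_step (Pt, Q) (zip js ut))"
  using assms
proof (induction u arbitrary: js ut P Pt Q)
  case Nil then show ?case by simp
next
  case (Cons x u)
  from Cons.prems(1) obtain i js' where js: "js = i # js'" by (cases js) auto
  from Cons.prems(2) obtain xt ut' where ut: "ut = xt # ut'" and Rx: "R x xt" and Ru: "list_all2 R u ut'"
    by (cases ut) auto
  have r1: "reduced_word (concat (rev P) @ [x])"
    using Cons.prems(6) reduced_prefix[of "concat (rev P) @ [x]" u] by simp
  have r2: "reduced_word (concat (rev Pt) @ [xt])"
    using Cons.prems(7) ut reduced_prefix[of "concat (rev Pt) @ [xt]" ut'] by simp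
  note pr = pair[OF Cons.prems(3,4,5) Rx r1 r2]
  note s1 = single[OF Cons.prems(3) r1]
  note s2 = single[OF Cons.prems(4) r2]
  have st1: "eg_step (P, Q) (i, x) = (fst (eg_insert x P), add_box (snd (eg_insert x P)) i Q)"
    by (simp add: eg_step_def split: prod.split)
  have st2: "eg_step (Pt, Q) (i, xt) = (fst (eg_insert xt Pt), add_box (snd (eg_insert xt Pt)) i Q)"
    by (simp add: eg_step_def split: prod.split)
  have n1: "reduced_word (concat (rev (fst (eg_insert x P))) @ u)"
  proof (rule reduced_same[OF Cons.prems(6)])
    show "perm_of_word (concat (rev (fst (eg_insert x P))) @ u) = perm_of_word (concat (rev P) @ x # u)"
      using s1 by (simp add: perm_append perm_Cons perm_Nil comp_assoc)
    show "length (concat (rev (fst (eg_insert x P))) @ u) = length (concat (rev P) @ x # u)"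
      using s1 by simp
  qed
  have n2: "reduced_word (concat (rev (fst (eg_insert xt Pt))) @ ut')"
  proof (rule reduced_same[OF Cons.prems(7)[unfolded ut]])
    show "perm_of_word (concat (rev (fst (eg_insert xt Pt))) @ ut') = perm_of_word (concat (rev Pt) @ xt # ut')"
      using s2 by (simp add: perm_append perm_Cons perm_Nil comp_assoc)
    show "length (concat (rev (fst (eg_insert xt Pt))) @ ut') = length (concat (rev Pt) @ xt # ut')"
      using s2 by simp
  qed
  have l: "length js' = length u" using Cons.prems(1) js by simp
  note IH = Cons.IH[OF l Ru _ _ _ n1 n2, of "add_box (snd (eg_insert x P)) i Q"]
  show ?case using IH s1 s2 pr unfolding js ut by (simp add: st1 st2)
qed

theorem proposition5p15:
  fixes w wt :: "int list"
  assumes "reduced_word w" and "reduced_word wt"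
    and "length wt = length w"
    and "\<forall>i < length w. wt ! i - w ! i \<in> {0, 1}"
  shows "Q_EG w = Q_EG wt"
proof -
  have "list_all2 R w wt"
    using assms(3,4) by (auto simp: list_all2_conv_all_nth R_def)
  moreover have l: "length [1..<length w + 1] = length w" by (simp only: length_upt)
  ultimately have "snd (foldl eg_step ([], []) (zip [1..<length w + 1] w)) =
             snd (foldl eg_step ([], []) (zip [1..<length w + 1] wt))"
    using main[OF l, of wt "[]" "[]" "[]"] assms(1,2) by simp
  then show ?thesis using assms(3) by (simp add: Q_EG_def EG_def)
qed


end
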